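(* (a) Let $\Gamma$ be a perfect matching drawing containing vertices $x,p,q,y$ with matching edges $xp$ and $qy$, where $p$ and $q$ are joined by exactly two non-matching edges which together bound a disk whose interior meets no other part of $\Gamma$, all of this lying in a disk $D$ that meets $\Gamma$ only in these vertices and edges and initial segments of the two other edges at $x$ and of the two other edges at $y$. Let $\Gamma'$ be obtained by replacing, inside $D$, the vertices $p,q$, the two edges between them and the matching edges $xp,qy$ by a single matching edge $xy$. Then $$\langle\Gamma\rangle_2(1)=2\,\langle\Gamma'\rangle_2(1).$$ (b) If $G$ is a planar trivalent graph with perfect matching $M$ containing such a configuration in a plane embedding, and $(G',M')$ is obtained by the same replacement, then $|G:M|_2=2\,|G':M'|_2$.
   Context: Graphs are finite and may have multiple edges; trivalent means every vertex has degree $3$. $|G:M|_2$ denotes the number of $2$-factors (spanning subgraphs in which every vertex has degree $2$) of $G$ that contain every edge of $M$. A perfect matching drawing $\Gamma$ is a collection of trivalent vertices, edges and vertex-free closed curves drawn in the $2$-sphere by a generic immersion (transverse double points away from vertices, carrying no extra data), together with a set $M$ of edges forming a perfect matching of the vertices. For a matching edge $e=uv$ with other edge-ends $\alpha,\beta$ at $u$ and $\gamma,\delta$ at $v$ in cyclic order $\alpha,\beta,\delta,\gamma$ around a small disk about $e$, the $0$-resolution deletes $e,u,v$ and joins $\alpha$–$\gamma$ and $\beta$–$\delta$ by disjoint arcs, and the $1$-resolution joins $\alpha$–$\delta$ and $\beta$–$\gamma$ by two arcs crossing once. For a state $s:M\to\{0,1\}$, resolving every matching edge gives $c(s)$ immersed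 closed curves, and the $2$-factor bracket is $\langle\Gamma\rangle_2(z)=\sum_s(-z)^{|s|}(z+z^{-1})^{c(s)}\in\mathbb{Z}[z,z^{-1}]$, $|s|$ being the number of edges assigned $1$. *)

theory Defs
  imports Complex_Main
begin

(* Combinatorial model of a (trivalent) perfect matching drawing:
   darts (half-edges) Ds; eps = edge involution (the other end of the edge);
   sig = rotation at a vertex (counterclockwise successor, w.r.t. the
   orientation of the sphere); vertices = sig-orbits (all of size 3);
   M = set of darts of the matching edges. *)

definition orbit3 :: "('d \<Rightarrow> 'd) \<Rightarrow> 'd \<Rightarrow> 'd set" where
  "orbit3 sig d = {d, sig d, sig (sig d)}"

definition pm_drawing :: "'d set \<Rightarrow> ('d \<Rightarrow> 'd) \<Rightarrow> ('d \<Rightarrow> 'd) \<Rightarrow> 'd set \<Rightarrow> bool" where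
  "pm_drawing Ds eps sig M \<longleftrightarrow>
     finite Ds \<and>
     (\<forall>d\<in>Ds. eps d \<in> Ds \<and> eps d \<noteq> d \<and> eps (eps d) = d) \<and>
     (\<forall>d\<in>Ds. sig d \<in> Ds \<and> sig d \<noteq> d \<and> sig (sig (sig d)) = d) \<and>
     M \<subseteq> Ds \<and> (\<forall>d\<in>M. eps d \<in> M) \<and>
     (\<forall>d\<in>Ds. card (orbit3 sig d \<inter> M) = 1)"

(* The resolution arc at the matching edge adjacent to the non-matching dart a.
   S = set of darts of matching edges in state 1.  With e_u the matching dart
   at the vertex u of a, e_v = eps e_u, the cyclic order around the edge is
   alpha = sig e_u, beta = sig^2 e_u, delta = sig e_v, gamma = sig^2 e_v. *)
definition res_partner :: "('d \<Rightarrow> 'd) \<Rightarrow> ('d \<Rightarrow> 'd) \<Rightarrow> 'd set \<Rightarrow> 'd set \<Rightarrow> 'd \<Rightarrow> 'd" where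
  "res_partner eps sig M S a =
     (if sig a \<in> M then
        (let e = sig a in if e \<in> S then sig (sig (eps e)) else sig (eps e))
      else
        (let e = sig (sig a) in if e \<in> S then sig (eps e) else sig (sig (eps e))))"

definition curve_rel :: "'d set \<Rightarrow> ('d \<Rightarrow> 'd) \<Rightarrow> ('d \<Rightarrow> 'd) \<Rightarrow> 'd set \<Rightarrow> 'd set \<Rightarrow> 'd rel" where
  "curve_rel Ds eps sig M S =
     {(a, b). a \<in> Ds - M \<and> (b = eps a \<or> b = res_partner eps sig M S a)}"

(* number of closed curves through vertices after resolving by state S *)
definition ncurves :: "'d set \<Rightarrow> ('d \<Rightarrow> 'd) \<Rightarrow> ('d \<Rightarrow> 'd) \<Rightarrow> 'd set \<Rightarrow> 'd set \<Rightarrow> nat" where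
  "ncurves Ds eps sig M S =
     card ((Ds - M) // ((curve_rel Ds eps sig M S \<union> (curve_rel Ds eps sig M S)\<inverse>)\<^sup>*))"

(* states: sets of matching edges (as eps-closed sets of matching darts) assigned 1 *)
definition states :: "('d \<Rightarrow> 'd) \<Rightarrow> 'd set \<Rightarrow> 'd set set" where
  "states eps M = {S. S \<subseteq> M \<and> (\<forall>d\<in>S. eps d \<in> S)}"

(* 2-factor bracket, with k vertex-free closed curves, evaluated at z *)
definition bracket2 :: "'d set \<Rightarrow> ('d \<Rightarrow> 'd) \<Rightarrow> ('d \<Rightarrow> 'd) \<Rightarrow> 'd set \<Rightarrow> nat \<Rightarrow> real \<Rightarrow> real" where
  "bracket2 Ds eps sig M k z =
     (\<Sum>S\<in>states eps M. (- z) ^ (card S div 2) * (z + 1 / z) ^ (ncurves Ds eps sig M S + k))"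

(* the local configuration: x-p (matching), p=q double edge bounding an empty
   bigon face, q-y (matching); xp at x, px at p, p1,p2 at p, q1,q2 at q,
   qy at q, yq at y *)
definition config :: "'d set \<Rightarrow> ('d \<Rightarrow> 'd) \<Rightarrow> ('d \<Rightarrow> 'd) \<Rightarrow> 'd set \<Rightarrow>
    'd \<Rightarrow> 'd \<Rightarrow> 'd \<Rightarrow> 'd \<Rightarrow> 'd \<Rightarrow> 'd \<Rightarrow> 'd \<Rightarrow> 'd \<Rightarrow> bool" where
  "config Ds eps sig M xp px p1 p2 q1 q2 qy yq \<longleftrightarrow>
     {xp, px, p1, p2, q1, q2, qy, yq} \<subseteq> Ds \<and>
     distinct [px, p1, p2, q1, q2, qy] \<and>
     xp \<notin> {px, p1, p2, q1, q2, qy} \<and> yq \<notin> {px, p1, p2, q1, q2, qy} \<and>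
     yq \<notin> orbit3 sig xp \<and>
     eps xp = px \<and> eps yq = qy \<and> eps p1 = q1 \<and> eps p2 = q2 \<and>
     sig px = p2 \<and> sig p2 = p1 \<and> sig p1 = px \<and>
     sig qy = q1 \<and> sig q1 = q2 \<and> sig q2 = qy \<and>
     px \<in> M \<and> qy \<in> M"

definition gen_rel :: "'d set \<Rightarrow> ('d \<Rightarrow> 'd) \<Rightarrow> 'd rel" where
  "gen_rel Ds f = {(a, b). a \<in> Ds \<and> b = f a}"

definition orbits_count :: "'d set \<Rightarrow> 'd rel \<Rightarrow> nat" where
  "orbits_count Ds r = card (Ds // ((r \<union> r\<inverse>)\<^sup>*))"

(* genus-0 (spherical/plane) rotation system: V - E + F = 2 * #components *)
definition planar_rot :: "'d set \<Rightarrow> ('d \<Rightarrow> 'd) \<Rightarrow> ('d \<Rightarrow> 'd) \<Rightarrow> bool" where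
  "planar_rot Ds eps sig \<longleftrightarrow>
     int (orbits_count Ds (gen_rel Ds sig)) - int (orbits_count Ds (gen_rel Ds eps))
       + int (orbits_count Ds (gen_rel Ds (\<lambda>d. sig (eps d))))
     = 2 * int (orbits_count Ds (gen_rel Ds sig \<union> gen_rel Ds eps))"

(* |G:M|_2 : number of 2-factors (eps-closed dart sets, every vertex has
   exactly two darts) containing all matching edges *)
definition two_factors_M :: "'d set \<Rightarrow> ('d \<Rightarrow> 'd) \<Rightarrow> ('d \<Rightarrow> 'd) \<Rightarrow> 'd set \<Rightarrow> nat" where
  "two_factors_M Ds eps sig M =
     card {F. F \<subseteq> Ds \<and> (\<forall>d\<in>F. eps d \<in> F) \<and> M \<subseteq> F \<and>
              (\<forall>d\<in>Ds. card (orbit3 sig d \<inter> F) = 2)}"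

end

theory Submission
  imports Defs
begin


lemma card_image_same_kernel:
  assumes "\<And>a1 a2. a1\<in>A \<Longrightarrow> a2\<in>A \<Longrightarrow> f1 a1 = f1 a2 \<longleftrightarrow> f2 a1 = f2 a2"
  shows "card (f1`A) = card (f2`A)"
proof -
  define h where "h c = f2 (SOME a. a\<in>A \<and> f1 a = c)" for c
  have hf: "h (f1 a) = f2 a" if "a \<in> A" for a
  proof -
    have "(SOME b. b\<in>A \<and> f1 b = f1 a) \<in> A \<and> f1 (SOME b. b\<in>A \<and> f1 b = f1 a) = f1 a"
      by (rule someI[of _ a]) (use that in auto)
    then show ?thesis unfolding h_def using assms that by blast
  qed
  have "f2`A = h`(f1`A)" using hf by (auto simp: image_iff)
  moreover have "inj_on h (f1`A)"
    by (auto simp: inj_on_def hf assms)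
  ultimately show ?thesis by (simp add: card_image)
qed

lemma card_quot_transfer:
  assumes "equiv UNIV r" "equiv UNIV s" "g ` A = B"
   "\<And>a1 a2. a1\<in>A \<Longrightarrow> a2\<in>A \<Longrightarrow> (a1,a2)\<in>r \<longleftrightarrow> (g a1, g a2)\<in>s"
  shows "card (A//r) = card (B//s)"
proof -
  have 1: "A//r = (\<lambda>a. r``{a}) ` A" unfolding quotient_def by auto
  have 2: "B//s = (\<lambda>a. s``{g a}) ` A" unfolding quotient_def using assms(3) by auto
  show ?thesis unfolding 1 2
    apply (rule card_image_same_kernel)
    using assms(4) eq_equiv_class_iff[OF assms(1)] eq_equiv_class_iff[OF assms(2)] by auto
qed

lemma equiv_rtrancl_sym: "equiv UNIV ((R \<union> R\<inverse>)\<^sup>*)"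
  by (rule equivI) (auto simp: refl_on_def sym_rtrancl[OF sym_Un_converse] trans_rtrancl)




locale cfg =
  fixes Ds :: "'d set" and eps sig :: "'d \<Rightarrow> 'd" and M :: "'d set"
    and xp px p1 p2 q1 q2 qy yq :: 'd
  assumes pm: "pm_drawing Ds eps sig M"
    and cf: "config Ds eps sig M xp px p1 p2 q1 q2 qy yq"
begin

abbreviation "xa \<equiv> sig xp"
abbreviation "xb \<equiv> sig (sig xp)"
abbreviation "ya \<equiv> sig yq"
abbreviation "yb \<equiv> sig (sig yq)"

lemma fin: "finite Ds" using pm by (simp add: pm_drawing_def)
lemma eps_in: "d \<in> Ds \<Longrightarrow> eps d \<in> Ds" using pm by (simp add: pm_drawing_def)
lemma eps_eps: "d \<in> Ds \<Longrightarrow> eps (eps d) = d" using pm by (simp add: pm_drawing_def)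
lemma sig_in: "d \<in> Ds \<Longrightarrow> sig d \<in> Ds" using pm by (simp add: pm_drawing_def)
lemma sig_ne: "d \<in> Ds \<Longrightarrow> sig d \<noteq> d" using pm by (simp add: pm_drawing_def)
lemma sig3: "d \<in> Ds \<Longrightarrow> sig (sig (sig d)) = d" using pm by (simp add: pm_drawing_def)
lemma MDs: "M \<subseteq> Ds" using pm by (simp add: pm_drawing_def)
lemma epsM: "d \<in> M \<Longrightarrow> eps d \<in> M" using pm by (simp add: pm_drawing_def)
lemma one: "d \<in> Ds \<Longrightarrow> card (orbit3 sig d \<inter> M) = 1" using pm by (simp add: pm_drawing_def)

lemma sig_ne2: "d \<in> Ds \<Longrightarrow> sig (sig d) \<noteq> d"
  by (metis sig3 sig_in sig_ne)
lemma sig_ne3: "d \<in> Ds \<Longrightarrow> sig (sig d) \<noteq> sig d"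
  by (metis sig_in sig_ne)

lemma card3: "a \<noteq> b \<Longrightarrow> b \<noteq> c \<Longrightarrow> a \<noteq> c \<Longrightarrow> card ({a,b,c} \<inter> M) = 1 \<Longrightarrow>
   (a \<in> M \<and> b \<notin> M \<and> c \<notin> M) \<or> (a \<notin> M \<and> b \<in> M \<and> c \<notin> M) \<or> (a \<notin> M \<and> b \<notin> M \<and> c \<in> M)"
  by (cases "a \<in> M"; cases "b \<in> M"; cases "c \<in> M") (auto simp: Int_insert_left)

lemma exactly_one: assumes "d \<in> Ds"
  shows "(d \<in> M \<and> sig d \<notin> M \<and> sig (sig d) \<notin> M) \<or> (d \<notin> M \<and> sig d \<in> M \<and> sig (sig d) \<notin> M)
       \<or> (d \<notin> M \<and> sig d \<notin> M \<and> sig (sig d) \<in> M)"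
  apply (rule card3)
  using sig_ne[OF assms] sig_ne2[OF assms] sig_ne3[OF assms] one[OF assms]
  by (simp_all add: orbit3_def)

lemma mate2: "d \<in> Ds \<Longrightarrow> d \<notin> M \<Longrightarrow> sig d \<notin> M \<Longrightarrow> sig (sig d) \<in> M"
  using exactly_one by blast

lemma orbit_same: assumes "c \<in> Ds" "d \<in> orbit3 sig c" shows "orbit3 sig d = orbit3 sig c"
proof -
  have s3: "sig (sig (sig c)) = c" using sig3 assms(1) by simp
  from assms(2) consider "d = c" | "d = sig c" | "d = sig (sig c)" unfolding orbit3_def by blast
  then show ?thesis by cases (simp_all add: orbit3_def s3 insert_commute)
qed

lemma orbit_mem: "d \<in> Ds \<Longrightarrow> d \<in> orbit3 sig (sig d)" unfolding orbit3_def using sig3[of d] by simp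

lemma orbit_disj: assumes "c \<in> Ds" "d \<in> Ds" "d \<notin> orbit3 sig c"
  shows "orbit3 sig c \<inter> orbit3 sig d = {}"
proof (rule ccontr)
  assume "orbit3 sig c \<inter> orbit3 sig d \<noteq> {}"
  then obtain e where "e \<in> orbit3 sig c" "e \<in> orbit3 sig d" by blast
  then have "orbit3 sig e = orbit3 sig c" "orbit3 sig e = orbit3 sig d"
    using orbit_same[OF assms(1)] orbit_same[OF assms(2)] by blast+
  moreover have "d \<in> orbit3 sig d" by (simp add: orbit3_def)
  ultimately show False using assms(3) by simp
qed

lemma C: "{xp, px, p1, p2, q1, q2, qy, yq} \<subseteq> Ds \<and>
     distinct [px, p1, p2, q1, q2, qy] \<and>
     xp \<notin> {px, p1, p2, q1, q2, qy} \<and> yq \<notin> {px, p1, p2, q1, q2, qy} \<and>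
     yq \<notin> orbit3 sig xp \<and>
     eps xp = px \<and> eps yq = qy \<and> eps p1 = q1 \<and> eps p2 = q2 \<and>
     sig px = p2 \<and> sig p2 = p1 \<and> sig p1 = px \<and>
     sig qy = q1 \<and> sig q1 = q2 \<and> sig q2 = qy \<and>
     px \<in> M \<and> qy \<in> M" using cf by (simp add: config_def)

lemma inDs: "xp \<in> Ds" "px \<in> Ds" "p1 \<in> Ds" "p2 \<in> Ds" "q1 \<in> Ds" "q2 \<in> Ds" "qy \<in> Ds" "yq \<in> Ds"
  using C by auto
lemma inDs2: "sig xp \<in> Ds" "sig (sig xp) \<in> Ds" "sig yq \<in> Ds" "sig (sig yq) \<in> Ds"
  using inDs sig_in by auto

lemma eqs: "eps xp = px" "eps yq = qy" "eps p1 = q1" "eps p2 = q2"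
     "sig px = p2" "sig p2 = p1" "sig p1 = px" "sig qy = q1" "sig q1 = q2" "sig q2 = qy"
  using C by auto
lemma eqs2: "eps px = xp" "eps qy = yq" "eps q1 = p1" "eps q2 = p2"
  "sig (sig (sig xp)) = xp" "sig (sig (sig yq)) = yq"
  using eps_eps inDs eqs sig3 by metis+

lemma Mfacts: "px \<in> M" "qy \<in> M" "xp \<in> M" "yq \<in> M"
  using C epsM eqs2 by metis+

lemma orbs: "orbit3 sig px = {px, p1, p2}" "orbit3 sig qy = {qy, q1, q2}"
  using eqs by (auto simp: orbit3_def)

lemma dist12: "distinct [xp, sig xp, sig (sig xp), yq, sig yq, sig (sig yq), px, p1, p2, qy, q1, q2]"
proof -
  have d1: "orbit3 sig xp \<inter> orbit3 sig yq = {}" using orbit_disj inDs C by blast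
  have d2: "orbit3 sig xp \<inter> orbit3 sig px = {}" using orbit_disj[of px xp] inDs C orbs by auto
  have d3: "orbit3 sig xp \<inter> orbit3 sig qy = {}" using orbit_disj[of qy xp] inDs C orbs by auto
  have d4: "orbit3 sig yq \<inter> orbit3 sig px = {}" using orbit_disj[of px yq] inDs C orbs by auto
  have d5: "orbit3 sig yq \<inter> orbit3 sig qy = {}" using orbit_disj[of qy yq] inDs C orbs by auto
  have d6: "orbit3 sig px \<inter> orbit3 sig qy = {}" using orbit_disj[of qy px] inDs C orbs by auto
  have i1: "xp \<noteq> sig xp" "sig xp \<noteq> sig (sig xp)" "xp \<noteq> sig (sig xp)"
    "yq \<noteq> sig yq" "sig yq \<noteq> sig (sig yq)" "yq \<noteq> sig (sig yq)"
    using sig_ne sig_ne2 sig_ne3 inDs by metis+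
  have e: "set [xp,xa,xb] = orbit3 sig xp" "set [yq,ya,yb] = orbit3 sig yq"
    "set [px,p1,p2] = orbit3 sig px" "set [qy,q1,q2] = orbit3 sig qy"
    unfolding orbs by (auto simp: orbit3_def)
  have dd: "distinct [xp,xa,xb]" "distinct [yq,ya,yb]" "distinct [px,p1,p2]" "distinct [qy,q1,q2]"
    using i1 C by auto
  have "distinct ([xp,xa,xb] @ [yq,ya,yb] @ [px,p1,p2] @ [qy,q1,q2])"
    unfolding distinct_append set_append e using dd d1 d2 d3 d4 d5 d6
    by (simp add: Int_Un_distrib Int_commute)
  then show ?thesis by simp
qed

lemma dist12r: "distinct [q2, q1, qy, p2, p1, px, yb, ya, yq, xb, xa, xp]"
proof -
  have "distinct (rev [xp, sig xp, sig (sig xp), yq, sig yq, sig (sig yq), px, p1, p2, qy, q1, q2])"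
    using dist12 by (simp only: distinct_rev)
  then show ?thesis by simp
qed

lemmas ds = dist12[simplified] dist12r[simplified]

lemma Mfacts2: "sig xp \<notin> M" "sig (sig xp) \<notin> M" "sig yq \<notin> M" "sig (sig yq) \<notin> M"
  "p1 \<notin> M" "p2 \<notin> M" "q1 \<notin> M" "q2 \<notin> M"
  using exactly_one[OF inDs(1)] exactly_one[OF inDs(8)] exactly_one[OF inDs(2)] exactly_one[OF inDs(7)]
    Mfacts eqs by auto



lemma orbs2: "orbit3 sig xp = {xp, xa, xb}" "orbit3 sig yq = {yq, ya, yb}"
  by (auto simp: orbit3_def)

lemma gen_orb: assumes "u \<in> Ds" "u \<notin> {xp, xa, xb, yq, ya, yb, px, p1, p2, qy, q1, q2}"
  shows "sig u \<notin> {xp, xa, xb, yq, ya, yb, px, p1, p2, qy, q1, q2}"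
    "sig (sig u) \<notin> {xp, xa, xb, yq, ya, yb, px, p1, p2, qy, q1, q2}"
proof -
  have "u \<notin> orbit3 sig xp" "u \<notin> orbit3 sig yq" "u \<notin> orbit3 sig px" "u \<notin> orbit3 sig qy"
    using assms(2) unfolding orbs orbs2 by simp_all
  then have "orbit3 sig xp \<inter> orbit3 sig u = {}" "orbit3 sig yq \<inter> orbit3 sig u = {}"
     "orbit3 sig px \<inter> orbit3 sig u = {}" "orbit3 sig qy \<inter> orbit3 sig u = {}"
    using orbit_disj inDs assms(1) by blast+
  then have "orbit3 sig u \<inter> {xp, xa, xb, yq, ya, yb, px, p1, p2, qy, q1, q2} = {}"
    unfolding orbs orbs2 by blast
  then show "sig u \<notin> {xp, xa, xb, yq, ya, yb, px, p1, p2, qy, q1, q2}"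
    "sig (sig u) \<notin> {xp, xa, xb, yq, ya, yb, px, p1, p2, qy, q1, q2}"
    unfolding orbit3_def by blast+
qed

lemma sigW: assumes "c \<in> Ds" "c \<in> M" "sig c \<in> {p1,p2,q1,q2} \<or> sig (sig c) \<in> {p1,p2,q1,q2}"
  shows "c \<in> {px, qy}"
proof -
  have "c = sig (sig (sig c))" using sig3 assms by simp
  then show ?thesis using assms(2,3) eqs Mfacts2 by auto
qed

end

locale cfgS = cfg +
  fixes S S'
  assumes same: "\<And>e. e \<notin> {xp,px,yq,qy} \<Longrightarrow> e\<in>S \<longleftrightarrow> e\<in>S'"
    and hpx: "px\<in>S \<longleftrightarrow> xp\<in>S" and hqy: "qy\<in>S \<longleftrightarrow> yq\<in>S"
    and hxp': "xp\<in>S' \<longleftrightarrow> ((xp\<in>S) \<noteq> (yq\<in>S))" and hyq': "yq\<in>S' \<longleftrightarrow> xp\<in>S'"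
begin

abbreviation "eps' \<equiv> eps(xp := yq, yq := xp)"
abbreviation "Ds' \<equiv> Ds - {px, p1, p2, q1, q2, qy}"
abbreviation "M' \<equiv> M - {px, qy}"
abbreviation "res \<equiv> res_partner eps sig M S"
abbreviation "res' \<equiv> res_partner eps' sig M' S'"
abbreviation "R \<equiv> curve_rel Ds eps sig M S"
abbreviation "R' \<equiv> curve_rel Ds' eps' sig M' S'"
definition "fW u = (if u \<in> {p1,p2,q1,q2} then res u else u)"

lemmas D = dist12[simplified] eqs eqs2 Mfacts Mfacts2

lemma res_conc:
  "res xa = (if xp \<in> S then p2 else p1)"
  "res xb = (if xp \<in> S then p1 else p2)"
  "res ya = (if yq \<in> S then q1 else q2)"
  "res yb = (if yq \<in> S then q2 else q1)"
  "res p1 = (if xp \<in> S then xb else xa)"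
  "res p2 = (if xp \<in> S then xa else xb)"
  "res q1 = (if yq \<in> S then ya else yb)"
  "res q2 = (if yq \<in> S then yb else ya)"
  unfolding res_partner_def using D hpx hqy by (simp_all add: Let_def)

lemma res'_conc:
  "res' xa = (if xp \<in> S' then ya else yb)"
  "res' xb = (if xp \<in> S' then yb else ya)"
  "res' ya = (if xp \<in> S' then xa else xb)"
  "res' yb = (if xp \<in> S' then xb else xa)"
  unfolding res_partner_def using D hyq' by (simp_all add: Let_def)


lemma generic: assumes "u \<in> Ds" "u \<notin> M" "u \<notin> {xp, xa, xb, yq, ya, yb, px, p1, p2, qy, q1, q2}"
  shows "res' u = res u" "res u \<notin> {p1,p2,q1,q2}" "eps' u = eps u" "eps u \<notin> {p1,p2,q1,q2}"
    "u \<in> Ds' - M'"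
proof -
  note g = gen_orb[OF assms(1,3)]
  have s1: "sig u \<in> M' \<longleftrightarrow> sig u \<in> M" "sig (sig u) \<in> M' \<longleftrightarrow> sig (sig u) \<in> M"
    "eps' (sig u) = eps (sig u)" "eps' (sig (sig u)) = eps (sig (sig u))"
    "sig u \<in> S' \<longleftrightarrow> sig u \<in> S" "sig (sig u) \<in> S' \<longleftrightarrow> sig (sig u) \<in> S"
    using g same[of "sig u"] same[of "sig (sig u)"] by simp_all
  show "res' u = res u" unfolding res_partner_def using s1 by (simp add: Let_def)
  show "eps' u = eps u" using assms by simp
  show "u \<in> Ds' - M'" using assms by simp
  show "eps u \<notin> {p1,p2,q1,q2}"
  proof
    assume "eps u \<in> {p1,p2,q1,q2}"
    then have "eps (eps u) \<in> {eps p1, eps p2, eps q1, eps q2}" by blast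
    then have "u \<in> {q1,q2,p1,p2}" using eps_eps[OF assms(1)] eqs eqs2 by simp
    then show False using assms by simp
  qed
  show "res u \<notin> {p1,p2,q1,q2}"
  proof
    assume a: "res u \<in> {p1,p2,q1,q2}"
    obtain e where e: "e \<in> {sig u, sig (sig u)}" "e \<in> M"
      "res u = sig (eps e) \<or> res u = sig (sig (eps e))"
    proof (cases "sig u \<in> M")
      case True
      then show ?thesis using that[of "sig u"] unfolding res_partner_def Let_def by simp
    next
      case False
      then have "sig (sig u) \<in> M" using mate2[OF assms(1,2)] by blast
      then show ?thesis using False that[of "sig (sig u)"] unfolding res_partner_def Let_def by simp
    qed
    have eD: "e \<in> Ds" using e MDs by auto
    have "eps e \<in> {px, qy}" apply (rule sigW)
      using e(2,3) a eps_in[OF eD] epsM by auto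
    then have "eps (eps e) \<in> {eps px, eps qy}" by blast
    then have "e \<in> {xp, yq}" using eps_eps[OF eD] eqs2 by simp
    then show False using e g by blast
  qed
qed



lemma X4: assumes "u \<in> {xa,xb,ya,yb}"
  shows "res u \<in> {p1,p2,q1,q2}" "res (res u) = u" "res' u = res (eps (res u))"
    "eps u \<notin> {p1,p2,q1,q2}" "u \<in> Ds' - M'" "u \<in> Ds - M"
proof -
  have "res u \<in> {p1,p2,q1,q2} \<and> res (res u) = u \<and> res' u = res (eps (res u))"
    using assms by (elim insertE emptyE; cases "xp \<in> S"; cases "yq \<in> S"; simp add: res_conc res'_conc eqs eqs2 hxp')
  then show "res u \<in> {p1,p2,q1,q2}" "res (res u) = u" "res' u = res (eps (res u))" by blast+
  have dd: "u \<notin> {q1,q2,p1,p2,px,qy}" using assms by (auto simp: ds)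
  show "u \<in> Ds' - M'" "u \<in> Ds - M" using assms dd inDs2 Mfacts2 by auto
  show "eps u \<notin> {p1,p2,q1,q2}"
  proof
    assume "eps u \<in> {p1,p2,q1,q2}"
    then have "eps (eps u) \<in> {eps p1, eps p2, eps q1, eps q2}" by blast
    moreover have "u \<in> Ds" using assms inDs2 by blast
    ultimately have "u \<in> {q1,q2,p1,p2}" using eps_eps[of u] eqs eqs2 by simp
    then show False using dd by simp
  qed
qed

lemma Wl: assumes "w \<in> {p1,p2,q1,q2}"
  shows "res w \<in> {xa,xb,ya,yb}" "res (res w) = w" "eps w \<in> {p1,p2,q1,q2}"
    "res' (res w) = res (eps w)" "w \<in> Ds - M"
proof -
  have "res w \<in> {xa,xb,ya,yb} \<and> res (res w) = w \<and> eps w \<in> {p1,p2,q1,q2} \<and>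
    res' (res w) = res (eps w)"
    using assms by (elim insertE emptyE; cases "xp \<in> S"; cases "yq \<in> S"; simp add: res_conc res'_conc eqs eqs2 hxp')
  then show "res w \<in> {xa,xb,ya,yb}" "res (res w) = w" "eps w \<in> {p1,p2,q1,q2}"
    "res' (res w) = res (eps w)" by blast+
  show "w \<in> Ds - M" using assms inDs Mfacts2 by auto
qed

lemma R_intro: "a \<in> A - B \<Longrightarrow> b = e a \<or> b = res_partner e s B S0 a \<Longrightarrow> (a,b) \<in> curve_rel A e s B S0"
  unfolding curve_rel_def by blast

abbreviation "Sy \<equiv> R \<union> R\<inverse>"
abbreviation "Sy' \<equiv> R' \<union> R'\<inverse>"

lemma WX_disj: "{p1,p2,q1,q2} \<inter> {xa,xb,ya,yb} = {}" using ds by auto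

lemma Ds'_eq: "Ds' - M' = (Ds - M) - {p1,p2,q1,q2}" using Mfacts by auto

lemma not12: assumes "u \<in> Ds - M" "u \<notin> {p1,p2,q1,q2}" "u \<notin> {xa,xb,ya,yb}"
  shows "u \<notin> {xp, xa, xb, yq, ya, yb, px, p1, p2, qy, q1, q2}"
  using assms Mfacts by auto

lemma fW_notW: "u \<notin> {p1,p2,q1,q2} \<Longrightarrow> fW u = u" by (simp add: fW_def)

lemma E1: assumes "(u,v) \<in> R" shows "(fW u, fW v) \<in> Sy'\<^sup>*"
proof -
  from assms have u: "u \<in> Ds - M" and v: "v = eps u \<or> v = res u" unfolding curve_rel_def by blast+
  consider (W) "u \<in> {p1,p2,q1,q2}" | (X) "u \<in> {xa,xb,ya,yb}" | (G) "u \<notin> {p1,p2,q1,q2}" "u \<notin> {xa,xb,ya,yb}"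
    by blast
  then show ?thesis
  proof cases
    case W
    note w = Wl[OF W]
    have rW: "fW (res u) = res u" using w(1) WX_disj by (intro fW_notW) blast
    from v show ?thesis
    proof
      assume "v = eps u"
      then have "(fW u, fW v) = (res u, res' (res u))" using w W by (simp add: fW_def)
      moreover have "(res u, res' (res u)) \<in> R'" using X4(5)[OF w(1)] by (intro R_intro) auto
      ultimately show ?thesis by auto
    next
      assume "v = res u"
      then have "fW v = fW u" using rW W by (simp add: fW_def)
      then show ?thesis by simp
    qed
  next
    case X
    note x = X4[OF X]
    have fu: "fW u = u" using X WX_disj by (intro fW_notW) blast
    from v show ?thesis
    proof
      assume ve: "v = eps u"
      then have "fW v = v" using x(4) by (simp add: fW_def)
      moreover have e: "eps' u = eps u" using X ds by auto
      have "(u, eps u) \<in> R'" by (rule R_intro[OF x(5)]) (rule disjI1, rule e[symmetric])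
      then have "(fW u, fW v) \<in> R'" using fu ve \<open>fW v = v\<close> by simp
      then show ?thesis by auto
    next
      assume "v = res u"
      then have "fW v = u" using x(1,2) by (simp add: fW_def)
      then show ?thesis using fu by simp
    qed
  next
    case G
    note g = generic[OF _ _ not12[OF u G]]
    have gg: "u \<in> Ds" "u \<notin> M" using u by auto
    have fu: "fW u = u" using G by (intro fW_notW)
    from v show ?thesis
    proof
      assume ve: "v = eps u"
      have "(u, eps u) \<in> R'" by (rule R_intro[OF g(5)[OF gg]]) (rule disjI1, rule g(3)[OF gg, symmetric])
      moreover have "fW v = v" using ve g(4)[OF gg] by (simp add: fW_def)
      ultimately show ?thesis using fu ve by auto
    next
      assume ve: "v = res u"
      have "(u, res u) \<in> R'" by (rule R_intro[OF g(5)[OF gg]]) (rule disjI2, rule g(1)[OF gg, symmetric])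
      moreover have "fW v = v" using ve g(2)[OF gg] by (simp add: fW_def)
      ultimately show ?thesis using fu ve by auto
    qed
  qed
qed

lemma E2: assumes "(u,v) \<in> R'" shows "(u,v) \<in> Sy\<^sup>*"
proof -
  from assms have u: "u \<in> Ds' - M'" and v: "v = eps' u \<or> v = res' u" unfolding curve_rel_def by blast+
  have u2: "u \<in> Ds - M" "u \<notin> {p1,p2,q1,q2}" using u Ds'_eq by auto
  show ?thesis
  proof (cases "u \<in> {xa,xb,ya,yb}")
    case True
    note x = X4[OF True]
    note w = Wl[OF x(1)]
    have e: "eps' u = eps u" using True ds by auto
    from v show ?thesis
    proof
      assume "v = eps' u"
      then have "(u,v) \<in> R" using e u2 by (simp add: curve_rel_def)
      then show ?thesis by auto
    next
      assume ve: "v = res' u"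
      have "(u, res u) \<in> R" using u2 by (simp add: curve_rel_def)
      moreover have "(res u, eps (res u)) \<in> R" using w(5) by (simp add: curve_rel_def)
      moreover have "(eps (res u), res (eps (res u))) \<in> R" using Wl(5)[OF w(3)] by (simp add: curve_rel_def)
      ultimately have "(u, res (eps (res u))) \<in> Sy\<^sup>*"
        by (meson UnI1 r_into_rtrancl rtrancl_trans)
      then show ?thesis using ve x(3) by simp
    qed
  next
    case False
    note g = generic[OF _ _ not12[OF u2 False]]
    have gg: "u \<in> Ds" "u \<notin> M" using u2 by auto
    have "(u,v) \<in> R" using v g[OF gg] u2 by (auto simp: curve_rel_def)
    then show ?thesis by auto
  qed
qed

lemma E3: assumes "u \<in> Ds - M" shows "(u, fW u) \<in> Sy\<^sup>*"
proof (cases "u \<in> {p1,p2,q1,q2}")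
  case True
  then have "(u, fW u) \<in> R" using assms by (simp add: curve_rel_def fW_def)
  then show ?thesis by auto
next
  case False
  then show ?thesis by (simp add: fW_def)
qed

lemma E1s: assumes "(a1,a2) \<in> Sy\<^sup>*" shows "(fW a1, fW a2) \<in> Sy'\<^sup>*"
  using assms
proof induction
  case base
  then show ?case by simp
next
  case (step y z)
  have "(fW y, fW z) \<in> Sy'\<^sup>*"
  proof (cases "(y,z) \<in> R")
    case True
    then show ?thesis using E1 by blast
  next
    case False
    then have "(z,y) \<in> R" using step(2) by auto
    then have "(fW z, fW y) \<in> Sy'\<^sup>*" using E1 by blast
    then show ?thesis
      by (metis rtrancl_converseI converse_Un converse_converse sup_commute)
  qed
  with step(3) show ?case by (meson rtrancl_trans)
qed

lemma E2s: "Sy'\<^sup>* \<subseteq> Sy\<^sup>*"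
proof -
  have "Sy' \<subseteq> Sy\<^sup>*"
  proof
    fix p assume "p \<in> Sy'"
    obtain a b where p0: "p = (a,b)" by (cases p)
    with \<open>p \<in> Sy'\<close> have p: "p = (a,b)" "(a,b) \<in> R' \<or> (b,a) \<in> R'" by auto
    then show "p \<in> Sy\<^sup>*"
    proof (cases "(a,b) \<in> R'")
      case True then show ?thesis using E2 p by blast
    next
      case False
      then have "(b,a) \<in> Sy\<^sup>*" using E2 p by blast
      then have "(a,b) \<in> Sy\<^sup>*"
        by (metis rtrancl_converseI converse_Un converse_converse sup_commute)
      then show ?thesis using p by simp
    qed
  qed
  then show ?thesis by (metis rtrancl_subset_rtrancl)
qed

lemma ncurves_eq: "ncurves Ds eps sig M S = ncurves Ds' eps' sig M' S'"
  unfolding ncurves_def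
proof (rule card_quot_transfer[where g = fW])
  show "equiv UNIV (Sy\<^sup>*)" "equiv UNIV (Sy'\<^sup>*)" by (rule equiv_rtrancl_sym)+
  show "fW ` (Ds - M) = Ds' - M'"
  proof
    show "fW ` (Ds - M) \<subseteq> Ds' - M'"
    proof
      fix b assume "b \<in> fW ` (Ds - M)"
      then obtain u where u: "u \<in> Ds - M" "b = fW u" by auto
      show "b \<in> Ds' - M'"
      proof (cases "u \<in> {p1,p2,q1,q2}")
        case True
        then have "b = res u" using u(2) by (simp add: fW_def)
        then show ?thesis using X4(5)[OF Wl(1)[OF True]] by blast
      next
        case False
        then show ?thesis using u Ds'_eq by (simp add: fW_def)
      qed
    qed
    show "Ds' - M' \<subseteq> fW ` (Ds - M)"
    proof
      fix b assume "b \<in> Ds' - M'"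
      then have "b \<in> Ds - M" "b \<notin> {p1,p2,q1,q2}" using Ds'_eq by auto
      then show "b \<in> fW ` (Ds - M)" using fW_notW by (metis image_eqI)
    qed
  qed
  fix a1 a2 assume a: "a1 \<in> Ds - M" "a2 \<in> Ds - M"
  show "(a1, a2) \<in> Sy\<^sup>* \<longleftrightarrow> (fW a1, fW a2) \<in> Sy'\<^sup>*"
  proof
    assume "(a1, a2) \<in> Sy\<^sup>*" then show "(fW a1, fW a2) \<in> Sy'\<^sup>*" by (rule E1s)
  next
    assume "(fW a1, fW a2) \<in> Sy'\<^sup>*"
    then have m: "(fW a1, fW a2) \<in> Sy\<^sup>*" using E2s by blast
    have "(a1, fW a1) \<in> Sy\<^sup>*" using E3 a(1) .
    moreover have "(a2, fW a2) \<in> Sy\<^sup>*" using E3 a(2) .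
    then have "(fW a2, a2) \<in> Sy\<^sup>*"
      by (metis rtrancl_converseI converse_Un converse_converse sup_commute)
    ultimately show "(a1, a2) \<in> Sy\<^sup>*" using m by (meson rtrancl_trans)
  qed
qed

end


context cfg begin

abbreviation "P \<equiv> {px,p1,p2,q1,q2,qy}"

lemma orbit_Ds': assumes "d \<in> Ds" "d \<notin> P" shows "orbit3 sig d \<inter> P = {}"
proof -
  have "d \<notin> orbit3 sig px" "d \<notin> orbit3 sig qy" using assms(2) unfolding orbs by auto
  then have "orbit3 sig px \<inter> orbit3 sig d = {}" "orbit3 sig qy \<inter> orbit3 sig d = {}"
    using orbit_disj inDs assms(1) by blast+
  then show ?thesis unfolding orbs by blast
qed

lemma orbit_sub: "d \<in> Ds \<Longrightarrow> orbit3 sig d \<subseteq> Ds" using sig_in by (auto simp: orbit3_def)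

lemma orbit_P: assumes "d \<in> P" shows "orbit3 sig d = {px,p1,p2} \<or> orbit3 sig d = {qy,q1,q2}"
proof -
  have "d \<in> orbit3 sig px \<or> d \<in> orbit3 sig qy" using assms unfolding orbs by auto
  then show ?thesis using orbit_same inDs orbs by metis
qed

lemma card2: "card {px, p1} = 2" "card {px, p2} = 2" "card {qy, q1} = 2" "card {qy, q2} = 2"
  "card {px, p1, p2} = 3" "card {qy, q1, q2} = 3" "card {px} = 1" "card {qy} = 1"
  using ds by auto

definition "Fam = {F. F \<subseteq> Ds \<and> (\<forall>d\<in>F. eps d \<in> F) \<and> M \<subseteq> F \<and> (\<forall>d\<in>Ds. card (orbit3 sig d \<inter> F) = 2)}"
definition "Fam' = {F. F \<subseteq> Ds - P \<and> (\<forall>d\<in>F. (eps(xp := yq, yq := xp)) d \<in> F) \<and> M - {px,qy} \<subseteq> F \<and>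
   (\<forall>d\<in>Ds - P. card (orbit3 sig d \<inter> F) = 2)}"

lemma F_from: assumes "F \<in> Fam'" "(a = p1 \<and> b = q1) \<or> (a = p2 \<and> b = q2)"
  shows "F \<union> {px,qy,a,b} \<in> Fam"
proof -
  have F: "F \<subseteq> Ds - P" "\<And>d. d \<in> F \<Longrightarrow> (eps(xp := yq, yq := xp)) d \<in> F" "M - {px,qy} \<subseteq> F"
    "\<And>d. d \<in> Ds - P \<Longrightarrow> card (orbit3 sig d \<inter> F) = 2" using assms(1) unfolding Fam'_def by auto
  have xyF: "xp \<in> F" "yq \<in> F" using F(3) Mfacts ds by auto
  let ?G = "F \<union> {px,qy,a,b}"
  have 1: "?G \<subseteq> Ds" using F(1) inDs assms(2) by auto
  have 2: "eps d \<in> ?G" if dG: "d \<in> ?G" for d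
  proof -
    consider "d \<in> F" "d = xp" | "d \<in> F" "d = yq" | "d \<in> F" "d \<noteq> xp" "d \<noteq> yq" | "d = px" | "d = qy" | "d = a" | "d = b"
      using dG by blast
    then show ?thesis
    proof cases
      case 3 then show ?thesis using F(2)[of d] by simp
    qed (use xyF eqs eqs2 assms(2) in auto)
  qed
  have 3: "M \<subseteq> ?G" using F(3) by auto
  have 4: "card (orbit3 sig d \<inter> ?G) = 2" if "d \<in> Ds" for d
  proof (cases "d \<in> P")
    case True
    have FP: "F \<inter> P = {}" using F(1) by blast
    from orbit_P[OF True] show ?thesis
    proof
      assume o: "orbit3 sig d = {px,p1,p2}"
      have "{px,p1,p2} \<inter> ?G = {px, a}" using FP assms(2) ds by auto
      then show ?thesis using o card2 assms(2) by auto
    next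
      assume o: "orbit3 sig d = {qy,q1,q2}"
      have "{qy,q1,q2} \<inter> ?G = {qy, b}" using FP assms(2) ds by auto
      then show ?thesis using o card2 assms(2) by auto
    qed
  next
    case False
    have "orbit3 sig d \<inter> ?G = orbit3 sig d \<inter> F"
      using orbit_Ds'[OF that False] assms(2) by auto
    then show ?thesis using F(4)[of d] that False by simp
  qed
  show ?thesis unfolding Fam_def using 1 2 3 4 by blast
qed

lemma F_to: assumes "F \<in> Fam"
  shows "F - P \<in> Fam'" "(p1 \<in> F \<and> q1 \<in> F \<and> p2 \<notin> F \<and> q2 \<notin> F) \<or> (p2 \<in> F \<and> q2 \<in> F \<and> p1 \<notin> F \<and> q1 \<notin> F)"
    "px \<in> F" "qy \<in> F"
proof -
  have F: "F \<subseteq> Ds" "\<And>d. d \<in> F \<Longrightarrow> eps d \<in> F" "M \<subseteq> F"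
    "\<And>d. d \<in> Ds \<Longrightarrow> card (orbit3 sig d \<inter> F) = 2" using assms(1) unfolding Fam_def by auto
  show pq: "px \<in> F" "qy \<in> F" using F(3) Mfacts by auto
  have cp: "card ({px,p1,p2} \<inter> F) = 2" using F(4)[OF inDs(2)] orbs by simp
  have cq: "card ({qy,q1,q2} \<inter> F) = 2" using F(4)[OF inDs(7)] orbs by simp
  have "(p1 \<in> F) \<noteq> (p2 \<in> F)"
  proof
    assume h: "(p1 \<in> F) = (p2 \<in> F)"
    show False
    proof (cases "p1 \<in> F")
      case True
      then have "{px,p1,p2} \<inter> F = {px,p1,p2}" using h pq by auto
      then show False using cp card2 by simp
    next
      case False
      then have "{px,p1,p2} \<inter> F = {px}" using h pq by auto
      then show False using cp card2 by simp
    qed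
  qed
  moreover have "p1 \<in> F \<longleftrightarrow> q1 \<in> F" "p2 \<in> F \<longleftrightarrow> q2 \<in> F" using F(2) eqs eqs2 by metis+
  ultimately show "(p1 \<in> F \<and> q1 \<in> F \<and> p2 \<notin> F \<and> q2 \<notin> F) \<or> (p2 \<in> F \<and> q2 \<in> F \<and> p1 \<notin> F \<and> q1 \<notin> F)"
    by blast
  let ?G = "F - P"
  have 1: "?G \<subseteq> Ds - P" using F(1) by auto
  have 2: "(eps(xp := yq, yq := xp)) d \<in> ?G" if dG: "d \<in> ?G" for d
  proof -
    have xy: "xp \<in> ?G" "yq \<in> ?G" using F(3) Mfacts ds by auto
    consider "d = xp" | "d = yq" | "d \<noteq> xp" "d \<noteq> yq" by blast
    then show ?thesis
    proof cases
      case 3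
      have dD: "d \<in> Ds" using dG F(1) by auto
      have "eps d \<notin> P"
      proof
        assume "eps d \<in> P"
        then have "eps (eps d) \<in> eps ` P" by blast
        then have "d \<in> {xp,q1,q2,p1,p2,yq}" using eps_eps[OF dD] eqs eqs2 by simp
        then show False using dG 3 by auto
      qed
      then show ?thesis using 3 F(2) dG by auto
    qed (use xy ds in auto)
  qed
  have 3: "M - {px,qy} \<subseteq> ?G" using F(3) Mfacts2 by auto
  have 4: "card (orbit3 sig d \<inter> ?G) = 2" if "d \<in> Ds - P" for d
  proof -
    have "orbit3 sig d \<inter> ?G = orbit3 sig d \<inter> F" using orbit_Ds'[of d] that by auto
    then show ?thesis using F(4)[of d] that by simp
  qed
  show "F - P \<in> Fam'" unfolding Fam'_def using 1 2 3 4 by blast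
qed

lemma fam_card: "card Fam = 2 * card Fam'"
proof -
  let ?g1 = "\<lambda>F. F \<union> {px,qy,p1,q1}" and ?g2 = "\<lambda>F. F \<union> {px,qy,p2,q2}"
  have sub: "F \<subseteq> Ds - P" if "F \<in> Fam'" for F using that unfolding Fam'_def by blast
  have fin: "finite Fam'" 
  proof (rule finite_subset)
    show "Fam' \<subseteq> Pow Ds" using sub by blast
    show "finite (Pow Ds)" using fin by simp
  qed
  have eq: "Fam = ?g1 ` Fam' \<union> ?g2 ` Fam'"
  proof
    show "Fam \<subseteq> ?g1 ` Fam' \<union> ?g2 ` Fam'"
    proof
      fix F assume F: "F \<in> Fam"
      note t = F_to[OF F]
      from t(2) show "F \<in> ?g1 ` Fam' \<union> ?g2 ` Fam'"
      proof
        assume "p1 \<in> F \<and> q1 \<in> F \<and> p2 \<notin> F \<and> q2 \<notin> F"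
        then have "F = ?g1 (F - P)" using t(3,4) by auto
        then show ?thesis using t(1) by blast
      next
        assume "p2 \<in> F \<and> q2 \<in> F \<and> p1 \<notin> F \<and> q1 \<notin> F"
        then have "F = ?g2 (F - P)" using t(3,4) by auto
        then show ?thesis using t(1) by blast
      qed
    qed
    show "?g1 ` Fam' \<union> ?g2 ` Fam' \<subseteq> Fam" using F_from by blast
  qed
  have inj1: "inj_on ?g1 Fam'"
  proof (rule inj_onI)
    fix F G assume "F \<in> Fam'" "G \<in> Fam'" "?g1 F = ?g1 G"
    then have "?g1 F - P = ?g1 G - P" by simp
    moreover have "?g1 F - P = F" "?g1 G - P = G" using sub \<open>F \<in> Fam'\<close> \<open>G \<in> Fam'\<close> by auto
    ultimately show "F = G" by simp
  qed
  have inj2: "inj_on ?g2 Fam'"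
  proof (rule inj_onI)
    fix F G assume "F \<in> Fam'" "G \<in> Fam'" "?g2 F = ?g2 G"
    then have "?g2 F - P = ?g2 G - P" by simp
    moreover have "?g2 F - P = F" "?g2 G - P = G" using sub \<open>F \<in> Fam'\<close> \<open>G \<in> Fam'\<close> by auto
    ultimately show "F = G" by simp
  qed
  have disj: "?g1 ` Fam' \<inter> ?g2 ` Fam' = {}"
  proof -
    have "p1 \<notin> ?g2 F" if "F \<in> Fam'" for F using sub[OF that] ds by auto
    then show ?thesis by blast
  qed
  have "card Fam = card (?g1 ` Fam') + card (?g2 ` Fam')"
    unfolding eq using fin disj by (simp add: card_Un_disjoint)
  also have "\<dots> = 2 * card Fam'" using card_image[OF inj1] card_image[OF inj2] by simp
  finally show ?thesis .
qed

lemma partb: "two_factors_M Ds eps sig M =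
           2 * two_factors_M (Ds - {px, p1, p2, q1, q2, qy}) (eps(xp := yq, yq := xp)) sig (M - {px, qy})"
  using fam_card unfolding two_factors_M_def Fam_def Fam'_def by simp

end


context cfg begin

abbreviation "M0 \<equiv> M - {xp,px,yq,qy}"
abbreviation "XX \<equiv> {xp,px}"
abbreviation "YY \<equiv> {yq,qy}"
abbreviation "ZZ \<equiv> {xp,yq}"
abbreviation "eps1 \<equiv> eps(xp := yq, yq := xp)"

lemma nc_link: assumes "T \<subseteq> M0" "A \<in> {{},XX}" "B \<in> {{},YY}"
  shows "ncurves Ds eps sig M (T \<union> A \<union> B) =
     ncurves (Ds - {px, p1, p2, q1, q2, qy}) eps1 sig (M - {px,qy}) (T \<union> (if (A = {}) = (B = {}) then {} else ZZ))"
proof -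
  have "cfgS Ds eps sig M xp px p1 p2 q1 q2 qy yq (T \<union> A \<union> B) (T \<union> (if (A = {}) = (B = {}) then {} else ZZ))"
  proof (intro cfgS.intro cfgS_axioms.intro)
    show "cfg Ds eps sig M xp px p1 p2 q1 q2 qy yq" by (rule cfg_axioms)
  qed (use assms ds in auto)
  then show ?thesis by (rule cfgS.ncurves_eq)
qed

lemma epsD: "d \<in> Ds \<Longrightarrow> eps d \<in> {xp,px,yq,qy} \<Longrightarrow> d \<in> {xp,px,yq,qy}"
proof -
  assume d: "d \<in> Ds" "eps d \<in> {xp,px,yq,qy}"
  then have "eps (eps d) \<in> eps ` {xp,px,yq,qy}" by blast
  then show ?thesis using eps_eps[OF d(1)] eqs eqs2 by auto
qed

lemma M0_states: "T \<in> states eps M0 \<Longrightarrow> T \<subseteq> M0 \<and> (\<forall>d\<in>T. eps d \<in> T)"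
  by (simp add: states_def)

lemma states_decomp:
  "states eps M = (\<lambda>(T,A,B). T \<union> A \<union> B) ` (states eps M0 \<times> ({{},XX} \<times> {{},YY}))"
proof
  show "states eps M \<subseteq> (\<lambda>(T,A,B). T \<union> A \<union> B) ` (states eps M0 \<times> ({{},XX} \<times> {{},YY}))"
  proof
    fix S assume S: "S \<in> states eps M"
    then have S1: "S \<subseteq> M" "\<And>d. d \<in> S \<Longrightarrow> eps d \<in> S" by (auto simp: states_def)
    have T: "S \<inter> M0 \<in> states eps M0"
    proof -
      have "eps d \<in> S \<inter> M0" if "d \<in> S \<inter> M0" for d
      proof -
        have dD: "d \<in> Ds" using that S1(1) MDs by auto
        have "eps d \<notin> {xp,px,yq,qy}" using epsD[OF dD] that by auto
        then show ?thesis using S1(2) epsM that by auto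
      qed
      then show ?thesis by (auto simp: states_def)
    qed
    have A: "S \<inter> XX \<in> {{},XX}" using S1(2)[of xp] S1(2)[of px] eqs eqs2 by auto
    have B: "S \<inter> YY \<in> {{},YY}" using S1(2)[of yq] S1(2)[of qy] eqs eqs2 by auto
    have "S = (S \<inter> M0) \<union> (S \<inter> XX) \<union> (S \<inter> YY)" using S1(1) by auto
    then show "S \<in> (\<lambda>(T,A,B). T \<union> A \<union> B) ` (states eps M0 \<times> ({{},XX} \<times> {{},YY}))"
      using T A B by (auto intro!: image_eqI[where x = "(S \<inter> M0, S \<inter> XX, S \<inter> YY)"])
  qed
  show "(\<lambda>(T,A,B). T \<union> A \<union> B) ` (states eps M0 \<times> ({{},XX} \<times> {{},YY})) \<subseteq> states eps M"
  proof
    fix S assume "S \<in> (\<lambda>(T,A,B). T \<union> A \<union> B) ` (states eps M0 \<times> ({{},XX} \<times> {{},YY}))"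
    then obtain T A B where T: "T \<in> states eps M0" and A: "A \<in> {{},XX}" and B: "B \<in> {{},YY}"
      and SS: "S = T \<union> A \<union> B" by auto
    have "T \<union> A \<union> B \<subseteq> M" using T A B Mfacts by (auto simp: states_def)
    moreover have "eps d \<in> T \<union> A \<union> B" if "d \<in> T \<union> A \<union> B" for d
      using that T A B eqs eqs2 by (auto simp: states_def)
    ultimately show "S \<in> states eps M" unfolding SS by (auto simp: states_def)
  qed
qed

lemma states_inj: "inj_on (\<lambda>(T,A,B). T \<union> A \<union> B) (states eps M0 \<times> ({{},XX} \<times> {{},YY}))"
proof (rule inj_onI)
  fix x y assume hx: "x \<in> states eps M0 \<times> ({{},XX} \<times> {{},YY})" and hy: "y \<in> states eps M0 \<times> ({{},XX} \<times> {{},YY})"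
    and e: "(\<lambda>(T,A,B). T \<union> A \<union> B) x = (\<lambda>(T,A,B). T \<union> A \<union> B) y"
  obtain T A B where x: "x = (T,A,B)" by (cases x) auto
  obtain T' A' B' where y: "y = (T',A',B')" by (cases y) auto
  have h: "T \<in> states eps M0" "A \<in> {{},XX}" "B \<in> {{},YY}" "T' \<in> states eps M0" "A' \<in> {{},XX}" "B' \<in> {{},YY}"
    "T \<union> A \<union> B = T' \<union> A' \<union> B'" using hx hy e x y by auto
  have "T = (T \<union> A \<union> B) \<inter> M0" "T' = (T' \<union> A' \<union> B') \<inter> M0" using h by (auto simp: states_def)
  then have 1: "T = T'" using h(7) by simp
  have "A = (T \<union> A \<union> B) \<inter> XX" "A' = (T' \<union> A' \<union> B') \<inter> XX" using h ds by (auto simp: states_def)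
  then have 2: "A = A'" using h(7) by simp
  have "B = (T \<union> A \<union> B) \<inter> YY" "B' = (T' \<union> A' \<union> B') \<inter> YY" using h ds by (auto simp: states_def)
  then have 3: "B = B'" using h(7) by simp
  show "x = y" using 1 2 3 x y by simp
qed

lemma states'_decomp:
  "states eps1 (M - {px,qy}) = (\<lambda>(T,C). T \<union> C) ` (states eps M0 \<times> {{},ZZ})"
proof
  show "states eps1 (M - {px,qy}) \<subseteq> (\<lambda>(T,C). T \<union> C) ` (states eps M0 \<times> {{},ZZ})"
  proof
    fix S assume S: "S \<in> states eps1 (M - {px,qy})"
    then have S1: "S \<subseteq> M - {px,qy}" "\<And>d. d \<in> S \<Longrightarrow> eps1 d \<in> S" by (auto simp: states_def)
    have T: "S \<inter> M0 \<in> states eps M0"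
    proof -
      have "eps d \<in> S \<inter> M0" if "d \<in> S \<inter> M0" for d
      proof -
        have dD: "d \<in> Ds" using that S1(1) MDs by auto
        have "eps d \<notin> {xp,px,yq,qy}" using epsD[OF dD] that by auto
        moreover have "eps1 d = eps d" using that by auto
        ultimately show ?thesis using S1(2)[of d] epsM that by auto
      qed
      then show ?thesis by (auto simp: states_def)
    qed
    have C: "S \<inter> ZZ \<in> {{},ZZ}" using S1(2)[of xp] S1(2)[of yq] ds by auto
    have "S = (S \<inter> M0) \<union> (S \<inter> ZZ)" using S1(1) by auto
    then show "S \<in> (\<lambda>(T,C). T \<union> C) ` (states eps M0 \<times> {{},ZZ})"
      using T C by (auto intro!: image_eqI[where x = "(S \<inter> M0, S \<inter> ZZ)"])
  qed
  show "(\<lambda>(T,C). T \<union> C) ` (states eps M0 \<times> {{},ZZ}) \<subseteq> states eps1 (M - {px,qy})"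
  proof
    fix S assume "S \<in> (\<lambda>(T,C). T \<union> C) ` (states eps M0 \<times> {{},ZZ})"
    then obtain T C where T: "T \<in> states eps M0" and C: "C \<in> {{},ZZ}"
      and SS: "S = T \<union> C" by auto
    have "T \<union> C \<subseteq> M - {px,qy}" using T C Mfacts ds by (auto simp: states_def)
    moreover have "eps1 d \<in> T \<union> C" if "d \<in> T \<union> C" for d
      using that T C by (auto simp: states_def)
    ultimately show "S \<in> states eps1 (M - {px,qy})" unfolding SS by (auto simp: states_def)
  qed
qed

lemma states'_inj: "inj_on (\<lambda>(T,C). T \<union> C) (states eps M0 \<times> {{},ZZ})"
proof (rule inj_onI)
  fix x y assume hx: "x \<in> states eps M0 \<times> {{},ZZ}" and hy: "y \<in> states eps M0 \<times> {{},ZZ}"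
    and e: "(\<lambda>(T,C). T \<union> C) x = (\<lambda>(T,C). T \<union> C) y"
  obtain T C where x: "x = (T,C)" by (cases x) auto
  obtain T' C' where y: "y = (T',C')" by (cases y) auto
  have h: "T \<in> states eps M0" "C \<in> {{},ZZ}" "T' \<in> states eps M0" "C' \<in> {{},ZZ}" "T \<union> C = T' \<union> C'"
    using hx hy e x y by auto
  have "T = (T \<union> C) \<inter> M0" "T' = (T' \<union> C') \<inter> M0" using h by (auto simp: states_def)
  then have 1: "T = T'" using h(5) by simp
  have "C = (T \<union> C) \<inter> ZZ" "C' = (T' \<union> C') \<inter> ZZ" using h by (auto simp: states_def)
  then have 2: "C = C'" using h(5) by simp
  show "x = y" using 1 2 x y by simp
qed

end


context cfg begin

lemma per_T: fixes k :: nat assumes T: "T \<in> states eps M0"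
  defines "h \<equiv> \<lambda>S. (-1::real)^(card S div 2) * 2^(ncurves Ds eps sig M S + k)"
    and "h' \<equiv> \<lambda>S. (-1::real)^(card S div 2) * 2^(ncurves (Ds - {px, p1, p2, q1, q2, qy}) eps1 sig (M - {px,qy}) S + k)"
  shows "(\<Sum>A\<in>{{},XX}. \<Sum>B\<in>{{},YY}. h (T \<union> A \<union> B)) = 2 * (\<Sum>C\<in>{{},ZZ}. h' (T \<union> C))"
proof -
  have TM: "T \<subseteq> M0" using T by (simp add: states_def)
  have "T \<subseteq> Ds" using TM MDs by blast
  then have finT: "finite T" using finite_subset fin by auto
  have nq: "xp \<noteq> px" "yq \<noteq> qy" "xp \<noteq> yq" "xp \<noteq> qy" "px \<noteq> yq" "px \<noteq> qy"
    by (simp_all add: ds)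
  have dis: "T \<inter> XX = {}" "T \<inter> YY = {}" "T \<inter> ZZ = {}" "(T \<union> XX) \<inter> YY = {}"
    using TM nq by auto
  have c2: "card XX = 2" "card YY = 2" "card ZZ = 2" using nq by simp_all
  have cX: "card (T \<union> XX) = card T + 2" using card_Un_disjoint[OF finT _ dis(1)] c2 by simp
  have cY: "card (T \<union> YY) = card T + 2" using card_Un_disjoint[OF finT _ dis(2)] c2 by simp
  have cZ: "card (T \<union> ZZ) = card T + 2" using card_Un_disjoint[OF finT _ dis(3)] c2 by simp
  have cXY: "card (T \<union> XX \<union> YY) = card T + 4"
    using card_Un_disjoint[of "T \<union> XX" YY] finT dis(4) c2 cX by simp
  have n00: "ncurves Ds eps sig M T = ncurves (Ds - {px, p1, p2, q1, q2, qy}) eps1 sig (M - {px,qy}) T"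
    using nc_link[OF TM, of "{}" "{}"] by simp
  have nXY: "ncurves Ds eps sig M (T \<union> XX \<union> YY) = ncurves (Ds - {px, p1, p2, q1, q2, qy}) eps1 sig (M - {px,qy}) T"
    using nc_link[OF TM, of XX YY] by simp
  have nX: "ncurves Ds eps sig M (T \<union> XX) = ncurves (Ds - {px, p1, p2, q1, q2, qy}) eps1 sig (M - {px,qy}) (T \<union> ZZ)"
    using nc_link[OF TM, of XX "{}"] by simp
  have nY: "ncurves Ds eps sig M (T \<union> YY) = ncurves (Ds - {px, p1, p2, q1, q2, qy}) eps1 sig (M - {px,qy}) (T \<union> ZZ)"
    using nc_link[OF TM, of "{}" YY] by simp
  have d2: "(card T + 2) div 2 = card T div 2 + 1" "(card T + 4) div 2 = card T div 2 + 2" by simp_all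
  have XX0: "XX \<noteq> {}" "YY \<noteq> {}" "ZZ \<noteq> {}" by auto
  show ?thesis
    using XX0 cX cY cZ cXY n00 nXY nX nY d2 by (simp add: h_def h'_def algebra_simps)
qed

lemma parta: "bracket2 Ds eps sig M k 1 =
           2 * bracket2 (Ds - {px, p1, p2, q1, q2, qy}) eps1 sig (M - {px, qy}) k 1"
proof -
  define h where "h \<equiv> \<lambda>S. (-1::real)^(card S div 2) * 2^(ncurves Ds eps sig M S + k)"
  define h' where "h' \<equiv> \<lambda>S. (-1::real)^(card S div 2) * 2^(ncurves (Ds - {px, p1, p2, q1, q2, qy}) eps1 sig (M - {px,qy}) S + k)"
  have b1: "bracket2 Ds eps sig M k 1 = sum h (states eps M)"
    by (simp add: bracket2_def h_def)
  have b2: "bracket2 (Ds - {px, p1, p2, q1, q2, qy}) eps1 sig (M - {px, qy}) k 1 = sum h' (states eps1 (M - {px,qy}))"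
    by (simp add: bracket2_def h'_def)
  have s1: "sum h (states eps M) = (\<Sum>T\<in>states eps M0. \<Sum>A\<in>{{},XX}. \<Sum>B\<in>{{},YY}. h (T \<union> A \<union> B))"
    unfolding states_decomp sum.reindex[OF states_inj] sum.cartesian_product' comp_def case_prod_conv by (rule refl)
  have s2: "sum h' (states eps1 (M - {px,qy})) = (\<Sum>T\<in>states eps M0. \<Sum>C\<in>{{},ZZ}. h' (T \<union> C))"
    unfolding states'_decomp sum.reindex[OF states'_inj] sum.cartesian_product' comp_def case_prod_conv by (rule refl)
  have "(\<Sum>T\<in>states eps M0. \<Sum>A\<in>{{},XX}. \<Sum>B\<in>{{},YY}. h (T \<union> A \<union> B))
     = (\<Sum>T\<in>states eps M0. 2 * (\<Sum>C\<in>{{},ZZ}. h' (T \<union> C)))"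
    by (rule sum.cong[OF refl]) (unfold h_def h'_def, rule per_T)
  then show ?thesis using b1 b2 s1 s2 by (simp add: sum_distrib_left)
qed

end


theorem lemma2p4:
  fixes Ds :: "'d set" and eps sig :: "'d \<Rightarrow> 'd" and M :: "'d set" and k :: nat
    and xp px p1 p2 q1 q2 qy yq :: 'd
  assumes "pm_drawing Ds eps sig M"
    and "config Ds eps sig M xp px p1 p2 q1 q2 qy yq"
  shows "bracket2 Ds eps sig M k 1 =
           2 * bracket2 (Ds - {px, p1, p2, q1, q2, qy}) (eps(xp := yq, yq := xp)) sig
                 (M - {px, qy}) k 1
       \<and> (planar_rot Ds eps sig \<longrightarrow>
           two_factors_M Ds eps sig M =
           2 * two_factors_M (Ds - {px, p1, p2, q1, q2, qy}) (eps(xp := yq, yq := xp)) sig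
                 (M - {px, qy}))"
proof -
  interpret cfg Ds eps sig M xp px p1 p2 q1 q2 qy yq
    by (rule cfg.intro) (rule assms)+
  show ?thesis using parta partb by simp
qed

end
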